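(* Let $\alpha_1,\alpha_2,\beta_1,\beta_2,q\in\mathbb Q$ with $\alpha_1+\alpha_2+\beta_1+\beta_2=1$, $\alpha_i+\beta_j\notin\mathbb Z$ for all $i,j$, $q+\alpha_j\notin\mathbb Z$, $q-\beta_j\notin\mathbb Z$, and $q+\alpha_j>0$ ($j=1,2$). Let $F_1(t)=t^{\alpha_1}{}_2F_1\!\left({\alpha_1+\beta_1,\alpha_1+\beta_2\atop1};1-t\right)$ and let $p_0(t)=\sum_id_it^i$, $p_1(t)=\sum_id'_it^i\in\mathbb C[t]$ with $p_1(1)=0$. Put \[ a_n:=\frac{(\alpha_1+q)_n(\alpha_2+q)_n}{(1-\beta_1+q)_n(1-\beta_2+q)_n}\ (n\ge0),\qquad C_m:=\sum_{i\ge-1}\big(d_i-d'_{i+1}(q+m+i)\big)a_{m+i}\ (m\ge1), \] with $d_{-1}:=0$. Then for every $m\ge1$, \[ I_m:=\int_0^1\big(p_0(t)F_1(t)+p_1(t)F_1'(t)\big)t^{q+m-1}\,dt=C_m\,\frac{\Gamma(\alpha_1+q)\Gamma(\alpha_2+q)}{\Gamma(1-\beta_1+q)\Gamma(1-\beta_2+q)}. \] Moreover, if $p_0,p_1$ are not both zero, then $C_m\neq0$ for infinitely many $m\ge1$.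
   Context: $(x)_n=x(x+1)\cdots(x+n-1)$ is the Pochhammer symbol and ${}_2F_1\!\left({a,b\atop c};x\right)=\sum_{n\ge0}\frac{(a)_n(b)_n}{(c)_n n!}x^n$ is Gauss's hypergeometric function (analytically continued); $t^{\alpha_1}$ is the real positive branch on $(0,1)$. *)

theory Defs
  imports "HOL-Analysis.Analysis" "HOL-Computational_Algebra.Polynomial"
begin

text \<open>In the statement it is only
  evaluated at arguments x = 1 - t with t in (0,1), i.e. inside the disc of
  convergence, where the analytic continuation coincides with the series.\<close>
definition hyp2f1 :: "real \<Rightarrow> real \<Rightarrow> real \<Rightarrow> real \<Rightarrow> real" where
  "hyp2f1 a b c x =
     (\<Sum>n. pochhammer a n * pochhammer b n / (pochhammer c n * fact n) * x ^ n)"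

definition F1 :: "real \<Rightarrow> real \<Rightarrow> real \<Rightarrow> real \<Rightarrow> real" where
  "F1 a1 b1 b2 t = t powr a1 * hyp2f1 (a1 + b1) (a1 + b2) 1 (1 - t)"

definition seq_a :: "real \<Rightarrow> real \<Rightarrow> real \<Rightarrow> real \<Rightarrow> real \<Rightarrow> nat \<Rightarrow> real" where
  "seq_a a1 a2 b1 b2 q n =
     pochhammer (a1 + q) n * pochhammer (a2 + q) n /
     (pochhammer (1 - b1 + q) n * pochhammer (1 - b2 + q) n)"

text \<open>All terms with
  i > max (degree p0) (degree p1) vanish, so the sum is over a finite range.\<close>
definition Cm :: "real \<Rightarrow> real \<Rightarrow> real \<Rightarrow> real \<Rightarrow> real \<Rightarrow> complex poly \<Rightarrow> complex poly \<Rightarrow> nat \<Rightarrow> complex" where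
  "Cm a1 a2 b1 b2 q p0 p1 m =
     (\<Sum>i\<in>{-1..int (max (degree p0) (degree p1))}.
        ((if i < 0 then 0 else coeff p0 (nat i))
          - coeff p1 (nat (i + 1)) * complex_of_real (q + real m + real_of_int i))
        * complex_of_real (seq_a a1 a2 b1 b2 q (nat (int m + i))))"

end

theory Submission
  imports Defs "HOL-Real_Asymp.Real_Asymp"
begin


lemma poch_asymp:
  fixes x :: real assumes x: "x \<notin> \<int>\<^sub>\<le>\<^sub>0"
  shows "(\<lambda>n. pochhammer x n / (fact n * real n powr (x - 1))) \<longlonglongrightarrow> inverse (Gamma x)"
proof -
  have G: "Gamma x \<noteq> 0" using x by (simp add: Gamma_eq_zero_iff)
  have l1: "(\<lambda>n. real n / (x + real n)) \<longlonglongrightarrow> 1" by real_asymp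
  have "(\<lambda>n. real n / (x + real n) * inverse (Gamma_series x n)) \<longlonglongrightarrow> 1 * inverse (Gamma x)"
    by (intro tendsto_intros l1 Gamma_series_LIMSEQ G)
  then have L: "(\<lambda>n. real n / (x + real n) * inverse (Gamma_series x n)) \<longlonglongrightarrow> inverse (Gamma x)" by simp
  have "\<forall>\<^sub>F n in sequentially. real n / (x + real n) * inverse (Gamma_series x n) =
          pochhammer x n / (fact n * real n powr (x - 1))"
      using eventually_gt_at_top[of "0::nat"]
    proof eventually_elim
      case (elim n)
      have xn: "x + real n \<noteq> 0"
      proof
        assume "x + real n = 0" then have "x = - of_nat n" by simp
        with x show False by simp
      qed
      have p: "real n powr x = real n * real n powr (x - 1)" using elim
        by (simp add: powr_diff)
      have e: "exp (x * ln (real n)) = real n powr x" using elim by (simp add: powr_def)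
      have np: "real n powr (x - 1) > 0" using elim by simp
      have i: "inverse (Gamma_series x n) = pochhammer x n * (x + real n) / (fact n * (real n * real n powr (x - 1)))"
        by (simp add: Gamma_series_def pochhammer_Suc e p)
      have alg: "\<And>(m::real) d P F N. d \<noteq> 0 \<Longrightarrow> m \<noteq> 0 \<Longrightarrow> F \<noteq> 0 \<Longrightarrow> N \<noteq> 0 \<Longrightarrow>
         m / d * (P * d / (F * (m * N))) = P / (F * N)" by (simp add: field_simps)
      show ?case unfolding i using elim xn np by (intro alg) auto
    qed
  from Lim_transform_eventually[OF L this] show ?thesis .
qed


definition Aterm :: "real \<Rightarrow> real \<Rightarrow> real \<Rightarrow> nat \<Rightarrow> real" where
  "Aterm a b c n = pochhammer a n * pochhammer b n / (pochhammer c n * fact n)"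

lemma Aterm_asymp:
  assumes a: "a \<notin> \<int>\<^sub>\<le>\<^sub>0" and b: "b \<notin> \<int>\<^sub>\<le>\<^sub>0" and c: "c > 0"
  shows "(\<lambda>n. Aterm a b c n / real n powr (a + b - c - 1)) \<longlonglongrightarrow> Gamma c / (Gamma a * Gamma b)"
proof -
  have c': "c \<notin> \<int>\<^sub>\<le>\<^sub>0" using c by (auto elim!: nonpos_Ints_cases)
  have cG: "inverse (Gamma c) \<noteq> 0" using c' by (simp add: Gamma_eq_zero_iff)
  have L: "(\<lambda>n. pochhammer a n / (fact n * real n powr (a - 1)) * (pochhammer b n / (fact n * real n powr (b - 1)))
       / (pochhammer c n / (fact n * real n powr (c - 1))))
      \<longlonglongrightarrow> inverse (Gamma a) * inverse (Gamma b) / inverse (Gamma c)"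
    by (intro tendsto_intros poch_asymp a b c' cG)
  have e: "\<forall>\<^sub>F n in sequentially. pochhammer a n / (fact n * real n powr (a - 1)) * (pochhammer b n / (fact n * real n powr (b - 1)))
       / (pochhammer c n / (fact n * real n powr (c - 1))) = Aterm a b c n / real n powr (a + b - c - 1)"
    using eventually_gt_at_top[of "0::nat"]
  proof eventually_elim
    case (elim n)
    have pc: "pochhammer c n > 0" using c by (rule pochhammer_pos)
    have ee: "a + b - c - 1 = (a - 1) + (b - 1) - (c - 1)" by simp
    have pw: "real n powr (a + b - c - 1) = real n powr (a - 1) * real n powr (b - 1) / real n powr (c - 1)"
      unfolding ee using elim by (simp add: powr_add powr_diff)
    show ?case using elim pc unfolding Aterm_def pw by (simp add: field_simps)
  qed
  show ?thesis using Lim_transform_eventually[OF L e] by (simp add: field_simps)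
qed

lemma Aterm_bound:
  assumes a: "a \<notin> \<int>\<^sub>\<le>\<^sub>0" and b: "b \<notin> \<int>\<^sub>\<le>\<^sub>0" and c: "c > 0"
  obtains K where "K > 0" "\<And>n. n \<ge> 1 \<Longrightarrow> \<bar>Aterm a b c n\<bar> \<le> K * real n powr (a + b - c - 1)"
proof -
  have "Bseq (\<lambda>n. Aterm a b c n / real n powr (a + b - c - 1))"
    using Aterm_asymp[OF a b c] by (intro convergent_imp_Bseq) (auto simp: convergent_def)
  then obtain K where K: "K > 0" "\<And>n. norm (Aterm a b c n / real n powr (a + b - c - 1)) \<le> K"
    by (auto elim!: BseqE)
  show ?thesis
  proof (rule that[OF K(1)])
    fix n :: nat assume "n \<ge> 1"
    then have p: "real n powr (a + b - c - 1) > 0" by simp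
    from K(2)[of n] p show "\<bar>Aterm a b c n\<bar> \<le> K * real n powr (a + b - c - 1)"
      by (simp add: abs_divide divide_le_eq)
  qed
qed

lemma Aterm_summable:
  assumes a: "a \<notin> \<int>\<^sub>\<le>\<^sub>0" and b: "b \<notin> \<int>\<^sub>\<le>\<^sub>0" and c: "c > 0" and cab: "c - a - b > 0"
  shows "summable (\<lambda>n. \<bar>Aterm a b c n\<bar>)"
proof -
  obtain K where K: "K > 0" "\<And>n. n \<ge> 1 \<Longrightarrow> \<bar>Aterm a b c n\<bar> \<le> K * real n powr (a + b - c - 1)"
    using Aterm_bound[OF a b c] by blast
  have "summable (\<lambda>n. K * real n powr (a + b - c - 1))"
    using cab by (intro summable_mult) (simp add: summable_real_powr_iff)
  then show ?thesis
    by (rule summable_comparison_test'[where N=1]) (use K in auto)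
qed

lemma Aterm_nlim:
  assumes a: "a \<notin> \<int>\<^sub>\<le>\<^sub>0" and b: "b \<notin> \<int>\<^sub>\<le>\<^sub>0" and c: "c > 0" and cab: "c - a - b > 0"
  shows "(\<lambda>n. real n * Aterm a b c n) \<longlonglongrightarrow> 0"
proof -
  obtain K where K: "K > 0" "\<And>n. n \<ge> 1 \<Longrightarrow> \<bar>Aterm a b c n\<bar> \<le> K * real n powr (a + b - c - 1)"
    using Aterm_bound[OF a b c] by blast
  have l: "(\<lambda>n. K * real n powr (a + b - c)) \<longlonglongrightarrow> 0"
    using cab by (intro tendsto_mult_right_zero tendsto_neg_powr filterlim_real_sequentially) auto
  show ?thesis
  proof (rule Lim_null_comparison[OF _ l])
    show "\<forall>\<^sub>F n in sequentially. norm (real n * Aterm a b c n) \<le> K * real n powr (a + b - c)"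
      using eventually_ge_at_top[of "1::nat"]
    proof eventually_elim
      case (elim n)
      have "norm (real n * Aterm a b c n) = real n * \<bar>Aterm a b c n\<bar>" by (simp add: abs_mult)
      also have "\<dots> \<le> real n * (K * real n powr (a + b - c - 1))"
        using K(2)[OF elim] by (intro mult_left_mono) auto
      also have "\<dots> = K * real n powr (a + b - c)"
      proof -
        have "real n powr (a + b - c) = real n powr (a + b - c - 1) * real n"
          using powr_add[of "real n" "a+b-c-1" 1] elim by simp
        then show ?thesis by simp
      qed
      finally show ?case .
    qed
  qed
qed

lemma Aterm_shift_c:
  assumes c: "c > 0"
  shows "Aterm a b (c + 1) n = Aterm a b c n * c / (c + real n)"
proof -
  have "pochhammer c (Suc n) = c * pochhammer (c + 1) n" by (rule pochhammer_rec)
  moreover have "pochhammer c (Suc n) = (c + real n) * pochhammer c n" by (rule pochhammer_rec')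
  ultimately have e: "pochhammer (c + 1) n = (c + real n) * pochhammer c n / c" using c by (simp add: field_simps)
  have "c + real n > 0" using c by simp
  moreover have "pochhammer c n > 0" using c by (rule pochhammer_pos)
  ultimately show ?thesis unfolding Aterm_def e using c by (simp add: field_simps)
qed

lemma Aterm_Suc:
  assumes c: "c > 0"
  shows "Aterm a b c (Suc n) = Aterm a b c n * (a + real n) * (b + real n) / ((c + real n) * (real n + 1))"
proof -
  have "c + real n > 0" using c by simp
  moreover have "pochhammer c n > 0" using c by (rule pochhammer_pos)
  ultimately show ?thesis unfolding Aterm_def using c by (simp add: pochhammer_rec' field_simps)
qed

lemma Aterm_rel:
  assumes c: "c > 0"
  shows "c * (c - a - b) * Aterm a b c n - (c - a) * (c - b) * Aterm a b (c + 1) n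
      = c * real n * Aterm a b c n - c * real (Suc n) * Aterm a b c (Suc n)"
proof -
  have cn: "c + real n \<noteq> 0" using c by simp
  have e: "real (Suc n) * Aterm a b c (Suc n) = Aterm a b c n * (a + real n) * (b + real n) / (c + real n)"
  proof -
    have alg: "\<And>(m::real) Y Z. m \<noteq> 0 \<Longrightarrow> m * (Y / (Z * m)) = Y / Z" by simp
    show ?thesis unfolding Aterm_Suc[OF c] of_nat_Suc add.commute[of 1 "real n"] by (rule alg) simp
  qed
  show ?thesis unfolding mult.assoc[of c "real (Suc n)"] e Aterm_shift_c[OF c]
    using cn by (simp add: field_simps)
qed

lemma gauss_contig:
  assumes a: "a \<notin> \<int>\<^sub>\<le>\<^sub>0" and b: "b \<notin> \<int>\<^sub>\<le>\<^sub>0" and c: "c > 0" and cab: "c - a - b > 0"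
  shows "c * (c - a - b) * suminf (Aterm a b c) = (c - a) * (c - b) * suminf (Aterm a b (c + 1))"
proof -
  have s1: "summable (Aterm a b c)" by (rule summable_rabs_cancel, rule Aterm_summable[OF a b c cab])
  have s2: "summable (Aterm a b (c + 1))"
    by (rule summable_rabs_cancel, rule Aterm_summable[OF a b]) (use c cab in auto)
  have S: "(\<lambda>n. c * (c - a - b) * Aterm a b c n - (c - a) * (c - b) * Aterm a b (c + 1) n) sums
      (c * (c - a - b) * suminf (Aterm a b c) - (c - a) * (c - b) * suminf (Aterm a b (c + 1)))"
    by (intro sums_diff sums_mult summable_sums s1 s2)
  have "(\<lambda>N. \<Sum>n<N. c * (c - a - b) * Aterm a b c n - (c - a) * (c - b) * Aterm a b (c + 1) n)
        = (\<lambda>N. - (c * (real N * Aterm a b c N)))"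
  proof
    fix N
    have "(\<Sum>n<N. c * (c - a - b) * Aterm a b c n - (c - a) * (c - b) * Aterm a b (c + 1) n)
        = (\<Sum>n<N. c * real n * Aterm a b c n - c * real (Suc n) * Aterm a b c (Suc n))"
      by (simp add: Aterm_rel[OF c])
    also have "\<dots> = c * real 0 * Aterm a b c 0 - c * real N * Aterm a b c N"
      by (rule sum_lessThan_telescope'[where f = "\<lambda>n. c * real n * Aterm a b c n"])
    finally show "(\<Sum>n<N. c * (c - a - b) * Aterm a b c n - (c - a) * (c - b) * Aterm a b (c + 1) n)
        = - (c * (real N * Aterm a b c N))" by simp
  qed
  moreover have "(\<lambda>N. - (c * (real N * Aterm a b c N))) \<longlonglongrightarrow> - (c * 0)"
    by (intro tendsto_intros Aterm_nlim a b c cab)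
  ultimately have "(\<lambda>n. c * (c - a - b) * Aterm a b c n - (c - a) * (c - b) * Aterm a b (c + 1) n) sums 0"
    unfolding sums_def by simp
  from sums_unique2[OF S this] show ?thesis by simp
qed


lemma nonpos_pos: "(c::real) > 0 \<Longrightarrow> c \<notin> \<int>\<^sub>\<le>\<^sub>0"
  by (auto elim!: nonpos_Ints_cases)

lemma gauss_iter:
  assumes a: "a \<notin> \<int>\<^sub>\<le>\<^sub>0" and b: "b \<notin> \<int>\<^sub>\<le>\<^sub>0" and c: "c > 0" and cab: "c - a - b > 0"
  shows "suminf (Aterm a b c) = pochhammer (c - a) k * pochhammer (c - b) k /
           (pochhammer c k * pochhammer (c - a - b) k) * suminf (Aterm a b (c + real k))"
proof (induction k)
  case 0 then show ?case by simp
next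
  case (Suc k)
  have ck: "c + real k > 0" "c + real k - a - b > 0" using c cab by auto
  have C: "(c + real k) * (c + real k - a - b) * suminf (Aterm a b (c + real k)) =
      (c + real k - a) * (c + real k - b) * suminf (Aterm a b (c + real k + 1))"
    by (rule gauss_contig[OF a b ck])
  have pc: "pochhammer c k > 0" "pochhammer (c - a - b) k > 0" using c cab by (auto intro: pochhammer_pos)
  have alg: "\<And>D x N y::real. D \<noteq> 0 \<Longrightarrow> D * x = N * y \<Longrightarrow> x = N / D * y"
    by (simp add: field_simps)
  have e: "suminf (Aterm a b (c + real k)) = (c + real k - a) * (c + real k - b) /
       ((c + real k) * (c + real k - a - b)) * suminf (Aterm a b (c + real (Suc k)))"
    using alg[OF _ C] ck by (simp add: ac_simps)
  show ?case unfolding Suc e using pc ck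
    by (simp add: pochhammer_Suc field_simps)
qed

lemma gauss_Pk_lim:
  fixes a b c :: real
  assumes c: "c > 0" and cab: "c - a - b > 0" and ca: "c - a \<notin> \<int>\<^sub>\<le>\<^sub>0" and cb: "c - b \<notin> \<int>\<^sub>\<le>\<^sub>0"
  shows "(\<lambda>k. pochhammer (c - a) k * pochhammer (c - b) k / (pochhammer c k * pochhammer (c - a - b) k))
     \<longlonglongrightarrow> Gamma c * Gamma (c - a - b) / (Gamma (c - a) * Gamma (c - b))"
proof -
  have c': "c \<notin> \<int>\<^sub>\<le>\<^sub>0" "c - a - b \<notin> \<int>\<^sub>\<le>\<^sub>0" using nonpos_pos[of c] nonpos_pos[of "c-a-b"] c cab by auto
  have G: "inverse (Gamma c) * inverse (Gamma (c - a - b)) \<noteq> 0" using c' by (simp add: Gamma_eq_zero_iff)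
  define Q where "Q x k = pochhammer x k / (fact k * real k powr (x - 1))" for x k
  have L: "(\<lambda>k. Q (c - a) k * Q (c - b) k / (Q c k * Q (c - a - b) k)) \<longlonglongrightarrow>
      inverse (Gamma (c - a)) * inverse (Gamma (c - b)) / (inverse (Gamma c) * inverse (Gamma (c - a - b)))"
    unfolding Q_def by (intro tendsto_intros poch_asymp ca cb c' G)
  have e: "\<forall>\<^sub>F k in sequentially. Q (c - a) k * Q (c - b) k / (Q c k * Q (c - a - b) k) =
     pochhammer (c - a) k * pochhammer (c - b) k / (pochhammer c k * pochhammer (c - a - b) k)"
    using eventually_gt_at_top[of "0::nat"]
  proof eventually_elim
    case (elim k)
    have pw: "real k powr (c - a - 1) * real k powr (c - b - 1) = real k powr (c - 1) * real k powr (c - a - b - 1)"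
      unfolding powr_add[symmetric] by (simp add: algebra_simps)
    have pp: "real k powr (c - 1) > 0" "real k powr (c - a - b - 1) > 0" using elim by auto
    have pc: "pochhammer c k > 0" "pochhammer (c - a - b) k > 0" using c cab by (auto intro: pochhammer_pos)
    have "Q (c - a) k * Q (c - b) k / (Q c k * Q (c - a - b) k) =
       pochhammer (c - a) k * pochhammer (c - b) k / (pochhammer c k * pochhammer (c - a - b) k) *
       ((real k powr (c - 1) * real k powr (c - a - b - 1)) / (real k powr (c - a - 1) * real k powr (c - b - 1)))"
      unfolding Q_def using pp pc by (simp add: field_simps)
    also have "\<dots> = pochhammer (c - a) k * pochhammer (c - b) k / (pochhammer c k * pochhammer (c - a - b) k)"
      unfolding pw using pp by simp
    finally show ?case .
  qed
  show ?thesis using Lim_transform_eventually[OF L e] by (simp add: field_simps)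
qed

lemma poch_ratio_le:
  fixes c :: real
  assumes c: "c > 0" and n: "n \<ge> 1"
  shows "pochhammer c n / pochhammer (c + real k) n \<le> c / (c + real k)"
  using n
proof (induction n)
  case 0 then show ?case by simp
next
  case (Suc n)
  show ?case
  proof (cases "n = 0")
    case True then show ?thesis by simp
  next
    case False
    then have IH: "pochhammer c n / pochhammer (c + real k) n \<le> c / (c + real k)" using Suc by simp
    have p: "pochhammer c n > 0" "pochhammer (c + real k) n > 0" using c by (auto intro: pochhammer_pos)
    have "pochhammer c (Suc n) / pochhammer (c + real k) (Suc n) =
        pochhammer c n / pochhammer (c + real k) n * ((c + real n) / (c + real k + real n))"
      by (simp add: pochhammer_Suc)
    also have "\<dots> \<le> pochhammer c n / pochhammer (c + real k) n * 1"
      using c p by (intro mult_left_mono) auto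
    finally show ?thesis using IH by simp
  qed
qed

lemma gauss_tail_lim:
  assumes a: "a \<notin> \<int>\<^sub>\<le>\<^sub>0" and b: "b \<notin> \<int>\<^sub>\<le>\<^sub>0" and c: "c > 0" and cab: "c - a - b > 0"
  shows "(\<lambda>k. suminf (Aterm a b (c + real k))) \<longlonglongrightarrow> 1"
proof -
  have sa: "summable (\<lambda>n. \<bar>Aterm a b c n\<bar>)" by (rule Aterm_summable[OF a b c cab])
  define S where "S = (\<Sum>n. \<bar>Aterm a b c (Suc n)\<bar>)"
  have sS: "summable (\<lambda>n. \<bar>Aterm a b c (Suc n)\<bar>)" using sa by (subst summable_Suc_iff)
  have bnd: "\<bar>Aterm a b (c + real k) (Suc n)\<bar> \<le> c / (c + real k) * \<bar>Aterm a b c (Suc n)\<bar>" for k n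
  proof -
    have p: "pochhammer c (Suc n) > 0" "pochhammer (c + real k) (Suc n) > 0" using c by (auto intro: pochhammer_pos)
    have alg: "\<And>X Y Y' F::real. Y \<noteq> 0 \<Longrightarrow> Y' \<noteq> 0 \<Longrightarrow> F \<noteq> 0 \<Longrightarrow> X / (Y' * F) = X / (Y * F) * (Y / Y')"
      by (simp add: field_simps)
    have "Aterm a b (c + real k) (Suc n) = Aterm a b c (Suc n) * (pochhammer c (Suc n) / pochhammer (c + real k) (Suc n))"
      unfolding Aterm_def using p by (intro alg) auto
    then have "\<bar>Aterm a b (c + real k) (Suc n)\<bar> = \<bar>Aterm a b c (Suc n)\<bar> * (pochhammer c (Suc n) / pochhammer (c + real k) (Suc n))"
      using p by (simp add: abs_mult)
    also have "\<dots> \<le> \<bar>Aterm a b c (Suc n)\<bar> * (c / (c + real k))"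
      by (intro mult_left_mono poch_ratio_le c) auto
    finally show ?thesis by (simp add: mult.commute)
  qed
  have sk: "summable (\<lambda>n. \<bar>Aterm a b (c + real k) (Suc n)\<bar>)" for k
    by (rule summable_comparison_test'[where N=0, OF summable_mult[OF sS, of "c / (c + real k)"]]) (use bnd in auto)
  have "\<forall>\<^sub>F k in sequentially. norm (suminf (Aterm a b (c + real k)) - 1) \<le> c * S / (c + real k)"
  proof (rule always_eventually, rule allI)
    fix k
    have sm: "summable (Aterm a b (c + real k))"
      using sk[of k] by (subst summable_Suc_iff[symmetric]) (rule summable_rabs_cancel)
    have "suminf (Aterm a b (c + real k)) - 1 = (\<Sum>n. Aterm a b (c + real k) (Suc n))"
      using suminf_split_head[OF sm] by (simp add: Aterm_def)
    then have "norm (suminf (Aterm a b (c + real k)) - 1) \<le> (\<Sum>n. \<bar>Aterm a b (c + real k) (Suc n)\<bar>)"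
      using summable_rabs[OF sk[of k]] by simp
    also have "\<dots> \<le> (\<Sum>n. c / (c + real k) * \<bar>Aterm a b c (Suc n)\<bar>)"
      by (intro suminf_le bnd sk summable_mult sS)
    also have "\<dots> = c * S / (c + real k)"
      unfolding S_def by (subst suminf_mult[OF sS]) simp
    finally show "norm (suminf (Aterm a b (c + real k)) - 1) \<le> c * S / (c + real k)" .
  qed
  moreover have "(\<lambda>k. c * S / (c + real k)) \<longlonglongrightarrow> 0" by real_asymp
  ultimately have "(\<lambda>k. suminf (Aterm a b (c + real k)) - 1) \<longlonglongrightarrow> 0"
    by (rule Lim_null_comparison)
  then show ?thesis by (simp add: LIM_zero_iff)
qed

theorem gauss_sum:
  assumes a: "a \<notin> \<int>\<^sub>\<le>\<^sub>0" and b: "b \<notin> \<int>\<^sub>\<le>\<^sub>0" and c: "c > 0" and cab: "c - a - b > 0"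
    and ca: "c - a \<notin> \<int>\<^sub>\<le>\<^sub>0" and cb: "c - b \<notin> \<int>\<^sub>\<le>\<^sub>0"
  shows "suminf (Aterm a b c) = Gamma c * Gamma (c - a - b) / (Gamma (c - a) * Gamma (c - b))"
proof -
  have "(\<lambda>k. pochhammer (c - a) k * pochhammer (c - b) k / (pochhammer c k * pochhammer (c - a - b) k)
        * suminf (Aterm a b (c + real k))) \<longlonglongrightarrow> Gamma c * Gamma (c - a - b) / (Gamma (c - a) * Gamma (c - b)) * 1"
    by (intro tendsto_mult gauss_Pk_lim gauss_tail_lim assms)
  moreover have "(\<lambda>k. pochhammer (c - a) k * pochhammer (c - b) k / (pochhammer c k * pochhammer (c - a - b) k)
        * suminf (Aterm a b (c + real k))) = (\<lambda>k. suminf (Aterm a b c))"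
    by (rule ext, rule gauss_iter[symmetric, OF a b c cab])
  ultimately have "(\<lambda>k. suminf (Aterm a b c)) \<longlonglongrightarrow> Gamma c * Gamma (c - a - b) / (Gamma (c - a) * Gamma (c - b))"
    by simp
  then show ?thesis by (simp add: LIMSEQ_const_iff)
qed


lemma binom_sums:
  fixes d x :: real assumes x: "0 \<le> x" "x < 1"
  shows "(\<lambda>n. pochhammer d n / fact n * x ^ n) sums (1 - x) powr (- d)"
proof -
  have "\<bar>- x\<bar> < 1" using x by simp
  from gen_binomial_real[OF this, of "- d"]
  have "(\<lambda>n. ((- d) gchoose n) * (- x) ^ n) sums (1 + - x) powr (- d)" .
  moreover have "((- d) gchoose n) * (- x) ^ n = pochhammer d n / fact n * x ^ n" for n
  proof -
    have g: "((- d) gchoose n) = (-1)^n * pochhammer d n / fact n" by (simp add: gbinomial_pochhammer)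
    have m: "(- x) ^ n = (-1)^n * x ^ n" by (rule power_minus)
    have o: "(-1::real)^n * (-1)^n = 1" by (simp add: power_mult_distrib[symmetric])
    have "((- d) gchoose n) * (- x) ^ n = ((-1)^n * (-1)^n) * (pochhammer d n / fact n * x ^ n)"
      unfolding g m by (simp add: field_simps)
    then show ?thesis unfolding o by simp
  qed
  ultimately show ?thesis by simp
qed

lemma coef_bound:
  fixes a b d :: real
  assumes a: "a \<notin> \<int>\<^sub>\<le>\<^sub>0" and b: "b \<notin> \<int>\<^sub>\<le>\<^sub>0" and d: "d > 0" "d > a + b - 1"
  shows "\<exists>K>0. \<forall>n. \<bar>Aterm a b 1 n\<bar> \<le> K * (pochhammer d n / fact n)"
proof -
  have d': "d \<notin> \<int>\<^sub>\<le>\<^sub>0" using d nonpos_pos by auto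
  have dG: "inverse (Gamma d) \<noteq> 0" using d' by (simp add: Gamma_eq_zero_iff)
  have L: "(\<lambda>n. Aterm a b 1 n / real n powr (a + b - 1 - 1) / (pochhammer d n / (fact n * real n powr (d - 1)))
        * real n powr (a + b - 1 - d)) \<longlonglongrightarrow> Gamma 1 / (Gamma a * Gamma b) / inverse (Gamma d) * 0"
    using d by (intro tendsto_intros Aterm_asymp a b poch_asymp d' dG tendsto_neg_powr filterlim_real_sequentially) auto
  have e: "\<forall>\<^sub>F n in sequentially. Aterm a b 1 n / real n powr (a + b - 1 - 1) / (pochhammer d n / (fact n * real n powr (d - 1)))
        * real n powr (a + b - 1 - d) = Aterm a b 1 n / (pochhammer d n / fact n)"
    using eventually_gt_at_top[of "0::nat"]
  proof eventually_elim
    case (elim n)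
    have pd: "pochhammer d n > 0" using d by (intro pochhammer_pos) auto
    have ee: "a + b - 1 - d = (a + b - 1 - 1) - (d - 1)" by simp
    have pw: "real n powr (a + b - 1 - d) = real n powr (a + b - 1 - 1) / real n powr (d - 1)"
      unfolding ee by (rule powr_diff)
    have pp: "real n powr (a + b - 1 - 1) > 0" "real n powr (d - 1) > 0" using elim by auto
    show ?case unfolding pw using pd pp by (simp add: field_simps)
  qed
  have "(\<lambda>n. Aterm a b 1 n / (pochhammer d n / fact n)) \<longlonglongrightarrow> 0"
    using Lim_transform_eventually[OF L e] by simp
  then have "Bseq (\<lambda>n. Aterm a b 1 n / (pochhammer d n / fact n))"
    by (intro convergent_imp_Bseq) (auto simp: convergent_def)
  then obtain K where K: "K > 0" "\<And>n. norm (Aterm a b 1 n / (pochhammer d n / fact n)) \<le> K"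
    by (auto elim!: BseqE)
  have H: "\<bar>Aterm a b 1 n\<bar> \<le> K * (pochhammer d n / fact n)" for n
  proof -
    have pd: "pochhammer d n / fact n > 0" using d by (intro divide_pos_pos pochhammer_pos) auto
    have "\<bar>Aterm a b 1 n\<bar> = norm (Aterm a b 1 n / (pochhammer d n / fact n)) * (pochhammer d n / fact n)"
    proof -
      have pp: "pochhammer d n > 0" using d by (intro pochhammer_pos) auto
      have "norm (Aterm a b 1 n / (pochhammer d n / fact n)) = \<bar>Aterm a b 1 n\<bar> / (pochhammer d n / fact n)"
        using pp by (simp add: abs_mult abs_divide)
      then show ?thesis using pp by (simp add: abs_mult)
    qed
    also have "\<dots> \<le> K * (pochhammer d n / fact n)" by (rule mult_right_mono[OF K(2)[of n]]) (use pd in simp)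
    finally show "\<bar>Aterm a b 1 n\<bar> \<le> K * (pochhammer d n / fact n)" .
  qed
  show ?thesis using K(1) H by blast
qed


lemma hyp_def': "hyp2f1 a b 1 x = (\<Sum>n. Aterm a b 1 n * x ^ n)"
  unfolding hyp2f1_def Aterm_def by (rule refl)

lemma hyp_summable:
  fixes a b x :: real
  assumes a: "a \<notin> \<int>\<^sub>\<le>\<^sub>0" and b: "b \<notin> \<int>\<^sub>\<le>\<^sub>0" and x: "\<bar>x\<bar> < 1"
  shows "summable (\<lambda>n. \<bar>Aterm a b 1 n * x ^ n\<bar>)"
proof -
  define d where "d = max 1 (a + b)"
  have d: "d > 0" "d > a + b - 1" unfolding d_def by auto
  from coef_bound[OF a b d] obtain K where K: "K > 0" "\<forall>n. \<bar>Aterm a b 1 n\<bar> \<le> K * (pochhammer d n / fact n)"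
    by (elim exE conjE)
  have "summable (\<lambda>n. K * (pochhammer d n / fact n * \<bar>x\<bar> ^ n))"
  proof -
    have bs: "(\<lambda>n. pochhammer d n / fact n * \<bar>x\<bar> ^ n) sums (1 - \<bar>x\<bar>) powr (- d)"
      by (rule binom_sums) (use x in auto)
    show ?thesis by (rule summable_mult[OF sums_summable[OF bs]])
  qed
  moreover have "norm \<bar>Aterm a b 1 n * x ^ n\<bar> \<le> K * (pochhammer d n / fact n * \<bar>x\<bar> ^ n)" for n
  proof -
    have "norm \<bar>Aterm a b 1 n * x ^ n\<bar> = \<bar>Aterm a b 1 n\<bar> * \<bar>x\<bar> ^ n" by (simp add: abs_mult power_abs)
    also have "\<dots> \<le> K * (pochhammer d n / fact n) * \<bar>x\<bar> ^ n"
      by (rule mult_right_mono[OF K(2)[rule_format]]) simp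
    also have "\<dots> = K * (pochhammer d n / fact n * \<bar>x\<bar> ^ n)" by (rule mult.assoc)
    finally show ?thesis .
  qed
  ultimately show ?thesis by (rule summable_comparison_test'[where N=0])
qed

lemma hyp_sums:
  fixes a b x :: real
  assumes a: "a \<notin> \<int>\<^sub>\<le>\<^sub>0" and b: "b \<notin> \<int>\<^sub>\<le>\<^sub>0" and x: "\<bar>x\<bar> < 1"
  shows "(\<lambda>n. Aterm a b 1 n * x ^ n) sums hyp2f1 a b 1 x"
  unfolding hyp_def' by (rule summable_sums, rule summable_rabs_cancel, rule hyp_summable[OF a b x])


lemma hyp_bound:
  fixes a b d :: real
  assumes a: "a \<notin> \<int>\<^sub>\<le>\<^sub>0" and b: "b \<notin> \<int>\<^sub>\<le>\<^sub>0" and d: "d > 0" "d > a + b - 1"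
  shows "\<exists>K>0. (\<forall>x N. 0 \<le> x \<longrightarrow> x < 1 \<longrightarrow> \<bar>\<Sum>n<N. Aterm a b 1 n * x ^ n\<bar> \<le> K * (1 - x) powr (- d))
    \<and> (\<forall>x. 0 \<le> x \<longrightarrow> x < 1 \<longrightarrow> \<bar>hyp2f1 a b 1 x\<bar> \<le> K * (1 - x) powr (- d))"
proof -
  from coef_bound[OF a b d] obtain K where K: "K > 0" "\<forall>n. \<bar>Aterm a b 1 n\<bar> \<le> K * (pochhammer d n / fact n)"
    by (elim exE conjE)
  have B: "(\<Sum>n. \<bar>Aterm a b 1 n * x ^ n\<bar>) \<le> K * (1 - x) powr (- d)"
    and P: "\<bar>\<Sum>n<N. Aterm a b 1 n * x ^ n\<bar> \<le> K * (1 - x) powr (- d)"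
    if x: "0 \<le> x" "x < 1" for x N
  proof -
    have sb: "(\<lambda>n. K * (pochhammer d n / fact n * x ^ n)) sums (K * (1 - x) powr (- d))"
      using binom_sums[OF x, of d] by (intro sums_mult)
    have sa: "summable (\<lambda>n. \<bar>Aterm a b 1 n * x ^ n\<bar>)" using x by (intro hyp_summable a b) auto
    have le: "\<bar>Aterm a b 1 n * x ^ n\<bar> \<le> K * (pochhammer d n / fact n * x ^ n)" for n
    proof -
      have "\<bar>Aterm a b 1 n * x ^ n\<bar> = \<bar>Aterm a b 1 n\<bar> * x ^ n" using x by (simp add: abs_mult)
      also have "\<dots> \<le> K * (pochhammer d n / fact n) * x ^ n"
        using x by (intro mult_right_mono K(2)[rule_format]) auto
      finally show ?thesis by (simp add: mult.assoc)
    qed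
    show B: "(\<Sum>n. \<bar>Aterm a b 1 n * x ^ n\<bar>) \<le> K * (1 - x) powr (- d)"
      using suminf_le[OF le sa] sb by (simp add: sums_iff)
    have "\<bar>\<Sum>n<N. Aterm a b 1 n * x ^ n\<bar> \<le> (\<Sum>n<N. \<bar>Aterm a b 1 n * x ^ n\<bar>)"
      by (rule sum_abs)
    also have "\<dots> \<le> (\<Sum>n. \<bar>Aterm a b 1 n * x ^ n\<bar>)"
      by (intro sum_le_suminf sa) auto
    finally show "\<bar>\<Sum>n<N. Aterm a b 1 n * x ^ n\<bar> \<le> K * (1 - x) powr (- d)" using B by linarith
  qed
  have H: "\<bar>hyp2f1 a b 1 x\<bar> \<le> K * (1 - x) powr (- d)" if x: "0 \<le> x" "x < 1" for x
  proof -
    have "\<bar>hyp2f1 a b 1 x\<bar> \<le> (\<Sum>n. \<bar>Aterm a b 1 n * x ^ n\<bar>)"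
      unfolding hyp_def' using x by (intro summable_rabs hyp_summable a b) auto
    then show "\<bar>hyp2f1 a b 1 x\<bar> \<le> K * (1 - x) powr (- d)" using B[OF x] by linarith
  qed
  show ?thesis
    apply (rule exI[of _ K])
    apply (intro conjI allI impI K(1))
     apply (erule (1) P)
    apply (erule (1) H)
    done
qed

lemma dummy1: "True" by simp


lemma Aterm_Beta:
  fixes a b s :: real assumes s: "s > 0"
  shows "Aterm a b 1 n * Beta s (real n + 1) = Aterm a b (s + 1) n / s"
proof -
  have s': "s \<notin> \<int>\<^sub>\<le>\<^sub>0" "s + 1 \<notin> \<int>\<^sub>\<le>\<^sub>0" using s nonpos_pos[of s] nonpos_pos[of "s+1"] by auto
  have G1: "Gamma (real n + 1) = fact n" using Gamma_fact[of n] by (simp add: add.commute)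
  have G2: "Gamma (s + (real n + 1)) = Gamma (s + 1) * pochhammer (s + 1) n"
    using pochhammer_Gamma[OF s'(2), of n] s'(2) by (simp add: Gamma_eq_zero_iff add_ac)
  have G3: "Gamma (s + 1) = s * Gamma s" by (rule Gamma_plus1[OF s'(1)])
  have Gs: "Gamma s \<noteq> 0" using s'(1) by (simp add: Gamma_eq_zero_iff)
  have pp: "pochhammer (s + 1) n > 0" using s by (intro pochhammer_pos) auto
  show ?thesis unfolding Beta_def Aterm_def G1 G2 G3 pochhammer_fact[symmetric]
    using s Gs pp by (simp add: field_simps)
qed

lemma mellin_hyp:
  fixes a b s :: real
  assumes a: "a \<notin> \<int>\<^sub>\<le>\<^sub>0" and b: "b \<notin> \<int>\<^sub>\<le>\<^sub>0" and s: "s > 0" and sab: "s + 1 - a - b > 0"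
    and sa: "s + 1 - a \<notin> \<int>\<^sub>\<le>\<^sub>0" and sb: "s + 1 - b \<notin> \<int>\<^sub>\<le>\<^sub>0"
  shows "((\<lambda>t. t powr (s - 1) * hyp2f1 a b 1 (1 - t)) has_integral
           (Gamma s * Gamma (s + 1 - a - b) / (Gamma (s + 1 - a) * Gamma (s + 1 - b)))) {0..1}"
proof -
  define d where "d = (max 0 (a + b - 1) + s) / 2"
  have d: "d > 0" "d > a + b - 1" "d < s" using s sab unfolding d_def by auto
  from hyp_bound[OF a b d(1,2)] obtain K where K: "K > 0"
    "\<forall>x N. 0 \<le> x \<longrightarrow> x < 1 \<longrightarrow> \<bar>\<Sum>n<N. Aterm a b 1 n * x ^ n\<bar> \<le> K * (1 - x) powr (- d)"
    "\<forall>x. 0 \<le> x \<longrightarrow> x < 1 \<longrightarrow> \<bar>hyp2f1 a b 1 x\<bar> \<le> K * (1 - x) powr (- d)"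
    by (elim exE conjE)
  define f where "f N t = t powr (s - 1) * (\<Sum>n<N. Aterm a b 1 n * (1 - t) ^ n)" for N t
  define g where "g t = t powr (s - 1) * hyp2f1 a b 1 (1 - t)" for t
  define h where "h t = K * t powr (s - 1 - d)" for t
  have fint: "(f N has_integral (\<Sum>n<N. Aterm a b 1 n * Beta s (real n + 1))) {0..1}" for N
  proof -
    have "((\<lambda>t. \<Sum>n<N. Aterm a b 1 n * (t powr (s - 1) * (1 - t) ^ n)) has_integral
        (\<Sum>n<N. Aterm a b 1 n * Beta s (real n + 1))) {0..1}"
    proof (rule has_integral_sum)
      fix n assume "n \<in> {..<N}"
      have B: "((\<lambda>t. t powr (s - 1) * (1 - t) powr (real n + 1 - 1)) has_integral Beta s (real n + 1)) {0..1}"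
        by (rule has_integral_Beta_real) (use s in auto)
      have "((\<lambda>t. t powr (s - 1) * (1 - t) ^ n) has_integral Beta s (real n + 1)) {0..1}"
      proof (rule has_integral_spike_finite[OF _ _ B, of "{1}"])
        fix t :: real assume t: "t \<in> {0..1} - {1}"
        then have "1 - t > 0" by auto
        then show "t powr (s - 1) * (1 - t) ^ n = t powr (s - 1) * (1 - t) powr (real n + 1 - 1)"
          by (simp add: powr_realpow)
      qed simp
      then show "((\<lambda>t. Aterm a b 1 n * (t powr (s - 1) * (1 - t) ^ n)) has_integral
          Aterm a b 1 n * Beta s (real n + 1)) {0..1}"
        by (rule has_integral_mult_right)
    qed simp
    moreover have "(\<lambda>t. \<Sum>n<N. Aterm a b 1 n * (t powr (s - 1) * (1 - t) ^ n)) = f N"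
      unfolding f_def by (intro ext) (simp add: sum_distrib_left mult_ac)
    ultimately show ?thesis by simp
  qed
  have hint: "(h has_integral (K * (1 powr (s - 1 - d + 1) / (s - 1 - d + 1)))) {0..1}"
    unfolding h_def by (intro has_integral_mult_right has_integral_powr_from_0) (use d in auto)
  have bnd: "norm (f N t) \<le> h t" if t: "t \<in> {0..1}" for N t
  proof (cases "t = 0")
    case True then show ?thesis using s d by (simp add: f_def h_def)
  next
    case False
    then have t0: "t > 0" using t by auto
    have "norm (f N t) = t powr (s - 1) * \<bar>\<Sum>n<N. Aterm a b 1 n * (1 - t) ^ n\<bar>"
      unfolding f_def by (simp add: abs_mult)
    also have "\<dots> \<le> t powr (s - 1) * (K * (1 - (1 - t)) powr (- d))"
      using K(2)[rule_format, of "1 - t" N] t t0 by (intro mult_left_mono) auto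
    also have "\<dots> = h t" unfolding h_def using t0 powr_add[of t 1 d] by (simp add: powr_diff powr_minus field_simps)
    finally show ?thesis .
  qed
  have conv: "(\<lambda>N. f N t) \<longlonglongrightarrow> g t" if t: "t \<in> {0..1}" for t
  proof (cases "t = 0")
    case True then show ?thesis using s by (simp add: f_def g_def)
  next
    case False
    then have "\<bar>1 - t\<bar> < 1" using t by auto
    from hyp_sums[OF a b this] have "(\<lambda>N. \<Sum>n<N. Aterm a b 1 n * (1 - t) ^ n) \<longlonglongrightarrow> hyp2f1 a b 1 (1 - t)"
      by (simp add: sums_def)
    then show ?thesis unfolding f_def g_def by (intro tendsto_mult_left)
  qed
  have DC: "g integrable_on {0..1}" "(\<lambda>N. integral {0..1} (f N)) \<longlonglongrightarrow> integral {0..1} g"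
    using dominated_convergence[where f=f and h=h and g=g and S="{0..1}"] fint hint bnd conv
    by (auto simp: has_integral_integrable_integral)
  have "(\<lambda>n. Aterm a b 1 n * Beta s (real n + 1)) sums integral {0..1} g"
  proof -
    have "integral {0..1} (f N) = (\<Sum>n<N. Aterm a b 1 n * Beta s (real n + 1))" for N
      by (rule integral_unique[OF fint])
    then show ?thesis using DC(2) unfolding sums_def by simp
  qed
  moreover have "(\<lambda>n. Aterm a b 1 n * Beta s (real n + 1)) = (\<lambda>n. Aterm a b (s + 1) n / s)"
    using Aterm_Beta[OF s] by auto
  ultimately have SS: "(\<lambda>n. Aterm a b (s + 1) n / s) sums integral {0..1} g" by simp
  have "Aterm a b (s + 1) sums (integral {0..1} g * s)"
    using sums_mult2[OF SS, of s] s by simp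
  then have "integral {0..1} g = suminf (Aterm a b (s + 1)) / s"
    using s by (simp add: sums_iff field_simps)
  also have "\<dots> = Gamma (s + 1) * Gamma (s + 1 - a - b) / (Gamma (s + 1 - a) * Gamma (s + 1 - b)) / s"
    using gauss_sum[of a b "s + 1"] a b s sab sa sb by simp
  also have "\<dots> = Gamma s * Gamma (s + 1 - a - b) / (Gamma (s + 1 - a) * Gamma (s + 1 - b))"
    using Gamma_plus1[of s] nonpos_pos[OF s] s by simp
  finally show ?thesis using DC(1) unfolding g_def by (simp add: has_integral_integrable_integral)
qed


lemma notInt_nonpos: "(x::real) \<notin> \<int> \<Longrightarrow> x \<notin> \<int>\<^sub>\<le>\<^sub>0"
  using nonpos_Ints_subset_Ints by blast

lemma notInt_add_nat: "(x::real) \<notin> \<int> \<Longrightarrow> x + real k \<notin> \<int>"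
proof
  assume "x \<notin> \<int>" "x + real k \<in> \<int>"
  then have "x + real k - real k \<in> \<int>" by (intro Ints_diff) auto
  with \<open>x \<notin> \<int>\<close> show False by simp
qed

lemma hyp_deriv:
  fixes a b x :: real
  assumes a: "a \<notin> \<int>\<^sub>\<le>\<^sub>0" and b: "b \<notin> \<int>\<^sub>\<le>\<^sub>0" and x: "\<bar>x\<bar> < 1"
  shows "\<exists>D. (hyp2f1 a b 1 has_real_derivative D) (at x)"
proof -
  have e: "hyp2f1 a b 1 = (\<lambda>z. \<Sum>n. Aterm a b 1 n * z ^ n)" by (intro ext) (rule hyp_def')
  have "((\<lambda>z. \<Sum>n. Aterm a b 1 n * z ^ n) has_real_derivative (\<Sum>n. diffs (Aterm a b 1) n * x ^ n)) (at x)"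
  proof (rule termdiffs_strong'[of 1])
    fix z :: real assume "norm z < 1"
    then show "summable (\<lambda>n. Aterm a b 1 n * z ^ n)"
      by (intro summable_rabs_cancel[OF hyp_summable[OF a b]]) simp
  qed (use x in simp)
  then show ?thesis unfolding e by blast
qed

locale hsetup =
  fixes a1 a2 b1 b2 q :: real
  assumes sum1: "a1 + a2 + b1 + b2 = 1"
    and ab1: "a1 + b1 \<notin> \<int>" and ab2: "a1 + b2 \<notin> \<int>"
    and qb1: "q - b1 \<notin> \<int>" and qb2: "q - b2 \<notin> \<int>"
    and qa1: "q + a1 > 0" and qa2: "q + a2 > 0"
begin

definition Gr where "Gr = Gamma (a1 + q) * Gamma (a2 + q) / (Gamma (1 - b1 + q) * Gamma (1 - b2 + q))"

abbreviation "F \<equiv> F1 a1 b1 b2"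
abbreviation "G \<equiv> hyp2f1 (a1 + b1) (a1 + b2) 1"

lemma a_np: "a1 + b1 \<notin> \<int>\<^sub>\<le>\<^sub>0" "a1 + b2 \<notin> \<int>\<^sub>\<le>\<^sub>0"
  using ab1 ab2 by (auto intro: notInt_nonpos)

lemma F_eq: "F t = t powr a1 * G (1 - t)"
  unfolding F1_def ..

lemma moment:
  "((\<lambda>t. F t * t powr (q + real k - 1)) has_integral (seq_a a1 a2 b1 b2 q k * Gr)) {0..1}"
proof -
  define s where "s = a1 + q + real k"
  have s: "s > 0" using qa1 unfolding s_def by simp
  have sab: "s + 1 - (a1 + b1) - (a1 + b2) = a2 + q + real k" using sum1 unfolding s_def by simp
  have sa: "s + 1 - (a1 + b1) = 1 - b1 + q + real k" unfolding s_def by simp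
  have sb: "s + 1 - (a1 + b2) = 1 - b2 + q + real k" unfolding s_def by simp
  have nb1: "1 - b1 + q \<notin> \<int>"
  proof
    assume "1 - b1 + q \<in> \<int>" then have "1 - b1 + q - 1 \<in> \<int>" by (intro Ints_diff) auto
    with qb1 show False by (simp add: algebra_simps)
  qed
  have nb2: "1 - b2 + q \<notin> \<int>"
  proof
    assume "1 - b2 + q \<in> \<int>" then have "1 - b2 + q - 1 \<in> \<int>" by (intro Ints_diff) auto
    with qb2 show False by (simp add: algebra_simps)
  qed
  have M: "((\<lambda>t. t powr (s - 1) * G (1 - t)) has_integral
           (Gamma s * Gamma (s + 1 - (a1 + b1) - (a1 + b2)) / (Gamma (s + 1 - (a1 + b1)) * Gamma (s + 1 - (a1 + b2))))) {0..1}"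
  proof (rule mellin_hyp[OF a_np s])
    show "s + 1 - (a1 + b1) - (a1 + b2) > 0" unfolding sab using qa2 by simp
    show "s + 1 - (a1 + b1) \<notin> \<int>\<^sub>\<le>\<^sub>0" unfolding sa by (intro notInt_nonpos notInt_add_nat nb1)
    show "s + 1 - (a1 + b2) \<notin> \<int>\<^sub>\<le>\<^sub>0" unfolding sb by (intro notInt_nonpos notInt_add_nat nb2)
  qed
  have f: "(\<lambda>t. t powr (s - 1) * G (1 - t)) = (\<lambda>t. F t * t powr (q + real k - 1))"
  proof
    fix t
    have "t powr (s - 1) = t powr a1 * t powr (q + real k - 1)"
      unfolding s_def by (subst powr_add[symmetric]) (simp add: algebra_simps)
    then show "t powr (s - 1) * G (1 - t) = F t * t powr (q + real k - 1)"
      unfolding F_eq by simp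
  qed
  have z1: "a1 + q \<notin> \<int>\<^sub>\<le>\<^sub>0" "a2 + q \<notin> \<int>\<^sub>\<le>\<^sub>0" using qa1 qa2 nonpos_pos by (auto simp: add.commute)
  have z2: "1 - b1 + q \<notin> \<int>\<^sub>\<le>\<^sub>0" "1 - b2 + q \<notin> \<int>\<^sub>\<le>\<^sub>0" using nb1 nb2 notInt_nonpos by auto
  have P: "Gamma (z + real k) = pochhammer z k * Gamma z" if "z \<notin> \<int>\<^sub>\<le>\<^sub>0" for z :: real
    using pochhammer_Gamma[OF that, of k] that by (simp add: Gamma_eq_zero_iff)
  have "Gamma s * Gamma (s + 1 - (a1 + b1) - (a1 + b2)) / (Gamma (s + 1 - (a1 + b1)) * Gamma (s + 1 - (a1 + b2)))
      = seq_a a1 a2 b1 b2 q k * Gr"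
    unfolding sab unfolding sa sb unfolding s_def
    unfolding P[OF z1(1)] P[OF z1(2)] P[OF z2(1)] P[OF z2(2)] seq_a_def Gr_def
    by (simp only: mult_ac times_divide_eq_left times_divide_eq_right divide_divide_eq_left)
  with M f show ?thesis by simp
qed

end


context hsetup begin

lemma F_hasderiv:
  assumes t: "0 < t" "t < 2"
  shows "(F has_real_derivative deriv F t) (at t)"
proof -
  have "\<bar>1 - t\<bar> < 1" using t by auto
  from hyp_deriv[OF a_np this] obtain D where D: "(G has_real_derivative D) (at (1 - t))" by blast
  have "((\<lambda>t. t powr a1 * G (1 - t)) has_real_derivative
          (t powr a1 * (D * (- 1)) + a1 * t powr (a1 - 1) * G (1 - t))) (at t)"
  proof (rule DERIV_mult')
    show "((\<lambda>t. t powr a1) has_real_derivative a1 * t powr (a1 - 1)) (at t)"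
      by (rule has_real_derivative_powr) (use t in simp)
    show "((\<lambda>t. G (1 - t)) has_real_derivative D * (- 1)) (at t)"
      by (rule DERIV_chain2[where f=G and g="\<lambda>t. 1 - t", OF D]) (auto intro!: derivative_eq_intros)
  qed
  then have "F differentiable (at t)"
    unfolding F1_def[abs_def] real_differentiable_def by blast
  then show ?thesis by (simp add: DERIV_deriv_iff_real_differentiable)
qed

lemma F_zero: "F 0 = 0" unfolding F_eq by simp

lemma G_zero: "G 0 = 1" unfolding hyp_def' by (subst powser_zero) (simp add: Aterm_def)

lemma F_one: "F 1 = 1" unfolding F_eq by (simp add: G_zero)

lemma G_near0:
  "\<exists>K d. K > 0 \<and> d > 0 \<and> d < a1 + q \<and>
    (\<forall>t. 0 < t \<longrightarrow> t \<le> 1 \<longrightarrow> \<bar>G (1 - t)\<bar> \<le> K * t powr (- d))"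
proof -
  define d where "d = (max 0 (a1 - a2) + (a1 + q)) / 2"
  have d: "d > 0" "d > (a1 + b1) + (a1 + b2) - 1" "d < a1 + q"
    using qa1 qa2 sum1 unfolding d_def by auto
  from hyp_bound[OF a_np d(1,2)] obtain K where K: "K > 0"
    "\<forall>x N. 0 \<le> x \<longrightarrow> x < 1 \<longrightarrow> \<bar>\<Sum>n<N. Aterm (a1 + b1) (a1 + b2) 1 n * x ^ n\<bar> \<le> K * (1 - x) powr (- d)"
    "\<forall>x. 0 \<le> x \<longrightarrow> x < 1 \<longrightarrow> \<bar>G x\<bar> \<le> K * (1 - x) powr (- d)"
    by (elim exE conjE)
  have "\<bar>G (1 - t)\<bar> \<le> K * t powr (- d)" if "0 < t" "t \<le> 1" for t
    using K(3)[rule_format, of "1 - t"] that by simp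
  with K(1) d(1,3) show ?thesis by blast
qed

lemma H_cont:
  assumes r: "r \<ge> q"
  shows "continuous_on {0..1} (\<lambda>t. F t * t powr r)"
proof -
  from G_near0 obtain K d where Kd: "K > 0" "d > 0" "d < a1 + q"
    "\<forall>t. 0 < t \<longrightarrow> t \<le> 1 \<longrightarrow> \<bar>G (1 - t)\<bar> \<le> K * t powr (- d)"
    by (elim exE conjE)
  define e where "e = a1 - d + r"
  have e: "e > 0" unfolding e_def using Kd(3) r by simp
  show ?thesis unfolding continuous_on_eq_continuous_within
  proof
    fix x :: real assume x: "x \<in> {0..1}"
    show "continuous (at x within {0..1}) (\<lambda>t. F t * t powr r)"
    proof (cases "x = 0")
      case False
      then have x0: "x > 0" using x by auto
      have "isCont F x" using F_hasderiv[of x] x0 x by (intro DERIV_isCont) auto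
      moreover have "isCont (\<lambda>t. t powr r) x" using has_real_derivative_powr[OF x0, of r] by (rule DERIV_isCont)
      ultimately have "isCont (\<lambda>t. F t * t powr r) x" by (rule isCont_mult)
      then show ?thesis by (rule continuous_at_imp_continuous_at_within)
    next
      case True
      have lim: "((\<lambda>t. K * t powr e) \<longlongrightarrow> 0) (at 0 within {0..1})"
      proof -
        have L0: "((\<lambda>t::real. t powr e) \<longlongrightarrow> 0) (at 0 within {0..1})"
          by (rule tendsto_zero_powrI[OF tendsto_ident_at tendsto_const _ e])
             (auto simp: eventually_at_filter)
        show ?thesis using tendsto_mult[OF tendsto_const[of K] L0] by simp
      qed
      have ev: "\<forall>\<^sub>F t in at 0 within {0..1}. norm (F t * t powr r) \<le> K * t powr e"
        unfolding eventually_at_filter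
      proof (rule always_eventually, intro allI impI)
        fix t :: real assume t: "t \<noteq> 0" "t \<in> {0..1}"
        then have t0: "0 < t" "t \<le> 1" by auto
        have "norm (F t * t powr r) = t powr a1 * \<bar>G (1 - t)\<bar> * t powr r"
          unfolding F_eq by (simp add: abs_mult)
        also have "\<dots> \<le> t powr a1 * (K * t powr (- d)) * t powr r"
          using Kd(4) t0 by (intro mult_right_mono mult_left_mono) auto
        also have "\<dots> = K * t powr e"
        proof -
          have "t powr e = t powr a1 * t powr (- d) * t powr r"
            unfolding e_def by (simp add: powr_add[symmetric])
          then show ?thesis by (simp add: mult_ac)
        qed
        finally show "norm (F t * t powr r) \<le> K * t powr e" .
      qed
      have "((\<lambda>t. F t * t powr r) \<longlongrightarrow> 0) (at 0 within {0..1})"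
        by (rule Lim_null_comparison[OF ev lim])
      then show ?thesis unfolding True continuous_within using F_zero by simp
    qed
  qed
qed

lemma deriv_moment:
  "((\<lambda>t. deriv F t * t powr (q + real (Suc j) - 1)) has_integral
     (1 - (q + real j) * seq_a a1 a2 b1 b2 q j * Gr)) {0..1}"
proof -
  define r where "r = q + real j"
  have r1: "q + real (Suc j) - 1 = r" unfolding r_def by simp
  define H' where "H' t = deriv F t * t powr r + F t * (r * t powr (r - 1))" for t
  have FTC: "(H' has_integral ((\<lambda>t. F t * t powr r) 1 - (\<lambda>t. F t * t powr r) 0)) {0..1}"
  proof (rule fundamental_theorem_of_calculus_interior)
    show "continuous_on {0..1} (\<lambda>t. F t * t powr r)" by (rule H_cont) (simp add: r_def)
  next
    fix x :: real assume x: "x \<in> {0<..<1}"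
    have "((\<lambda>t. F t * t powr r) has_real_derivative (deriv F x * x powr r + F x * (r * x powr (r - 1)))) (at x)"
    proof -
      have "((\<lambda>t. F t * t powr r) has_real_derivative (F x * (r * x powr (r - 1)) + deriv F x * x powr r)) (at x)"
        by (rule DERIV_mult'[OF F_hasderiv has_real_derivative_powr]) (use x in auto)
      then show ?thesis by (simp add: add.commute)
    qed
    then show "((\<lambda>t. F t * t powr r) has_vector_derivative H' x) (at x)"
      unfolding H'_def has_real_derivative_iff_has_vector_derivative .
  qed simp
  have V: "(\<lambda>t. F t * t powr r) 1 - (\<lambda>t. F t * t powr r) 0 = 1" by (simp add: F_one F_zero)
  have M: "((\<lambda>t. F t * (r * t powr (r - 1))) has_integral (r * (seq_a a1 a2 b1 b2 q j * Gr))) {0..1}"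
  proof -
    have "((\<lambda>t. r * (F t * t powr (q + real j - 1))) has_integral (r * (seq_a a1 a2 b1 b2 q j * Gr))) {0..1}"
      by (rule has_integral_mult_right[OF moment])
    moreover have "(\<lambda>t. r * (F t * t powr (q + real j - 1))) = (\<lambda>t. F t * (r * t powr (r - 1)))"
      unfolding r_def by (simp add: mult_ac)
    ultimately show ?thesis by simp
  qed
  have "((\<lambda>t. H' t - F t * (r * t powr (r - 1))) has_integral (1 - r * (seq_a a1 a2 b1 b2 q j * Gr))) {0..1}"
    using has_integral_diff[OF FTC M] unfolding V .
  moreover have "(\<lambda>t. H' t - F t * (r * t powr (r - 1))) = (\<lambda>t. deriv F t * t powr (q + real (Suc j) - 1))"
    unfolding H'_def r1 by simp
  ultimately show ?thesis unfolding r_def by (simp add: mult_ac)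
qed

end


lemma poly_sum_le:
  fixes p :: "complex poly"
  assumes "degree p \<le> D"
  shows "poly p x = (\<Sum>i\<le>D. coeff p i * x ^ i)"
proof -
  have "poly p x = (\<Sum>i\<le>degree p. coeff p i * x ^ i)" by (rule poly_altdef)
  also have "\<dots> = (\<Sum>i\<le>D. coeff p i * x ^ i)"
    by (rule sum.mono_neutral_left) (use assms in \<open>auto simp: coeff_eq_0\<close>)
  finally show ?thesis .
qed

lemma int_range_split:
  fixes g :: "int \<Rightarrow> 'a::comm_monoid_add"
  shows "(\<Sum>i\<in>{-1..int D}. g i) = g (-1) + (\<Sum>i\<le>D. g (int i))"
proof -
  have S: "{-1..int D} = insert (-1) (int ` {..D})"
  proof (rule set_eqI)
    fix x :: int
    show "x \<in> {-1..int D} \<longleftrightarrow> x \<in> insert (-1) (int ` {..D})"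
    proof
      assume x: "x \<in> {-1..int D}"
      show "x \<in> insert (-1) (int ` {..D})"
      proof (cases "x = -1")
        case False
        then have "x = int (nat x)" "nat x \<le> D" using x by auto
        then show ?thesis by (intro insertI2 image_eqI[of _ _ "nat x"]) auto
      qed simp
    qed auto
  qed
  have "-1 \<notin> int ` {..D}" by auto
  then have "(\<Sum>i\<in>{-1..int D}. g i) = g (-1) + sum g (int ` {..D})"
    unfolding S by (subst sum.insert) auto
  also have "sum g (int ` {..D}) = (\<Sum>i\<le>D. g (int i))"
    by (subst sum.reindex) (auto simp: inj_on_def)
  finally show ?thesis .
qed

context hsetup begin

lemma Cm_split:
  fixes p0 p1 :: "complex poly"
  defines "D \<equiv> max (degree p0) (degree p1)"
  shows "Cm a1 a2 b1 b2 q p0 p1 (Suc m') =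
    (\<Sum>i\<le>D. coeff p0 i * of_real (seq_a a1 a2 b1 b2 q (Suc m' + i)))
    - (\<Sum>i\<le>D. coeff p1 i * of_real ((q + real (m' + i)) * seq_a a1 a2 b1 b2 q (m' + i)))"
proof -
  define sa where "sa = seq_a a1 a2 b1 b2 q"
  have "Cm a1 a2 b1 b2 q p0 p1 (Suc m') =
     (0 - coeff p1 0 * of_real (q + real (Suc m') - 1)) * of_real (sa m')
     + (\<Sum>i\<le>D. (coeff p0 i - coeff p1 (Suc i) * of_real (q + real (Suc m') + real i)) * of_real (sa (Suc m' + i)))"
    unfolding Cm_def D_def[symmetric] sa_def[symmetric]
    by (subst int_range_split) (simp add: nat_add_distrib)
  also have "\<dots> = (\<Sum>i\<le>D. coeff p0 i * of_real (sa (Suc m' + i)))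
     - (coeff p1 0 * of_real ((q + real m') * sa m') +
        (\<Sum>i\<le>D. coeff p1 (Suc i) * of_real ((q + real (m' + Suc i)) * sa (m' + Suc i))))"
    by (simp add: algebra_simps sum_subtractf sum.distrib)
  also have "coeff p1 0 * of_real ((q + real m') * sa m') +
        (\<Sum>i\<le>D. coeff p1 (Suc i) * of_real ((q + real (m' + Suc i)) * sa (m' + Suc i)))
      = (\<Sum>i\<le>Suc D. coeff p1 i * of_real ((q + real (m' + i)) * sa (m' + i)))"
    by (subst sum.atMost_Suc_shift) simp
  also have "\<dots> = (\<Sum>i\<le>D. coeff p1 i * of_real ((q + real (m' + i)) * sa (m' + i)))"
    by (subst sum.atMost_Suc) (simp add: coeff_eq_0 D_def)
  finally show ?thesis unfolding sa_def .
qed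

end


context hsetup begin

lemma main_integral:
  fixes p0 p1 :: "complex poly"
  assumes p1: "poly p1 1 = 0"
  shows "((\<lambda>t. (poly p0 (complex_of_real t) * complex_of_real (F t)
                  + poly p1 (complex_of_real t) * complex_of_real (deriv F t))
                 * complex_of_real (t powr (q + real (Suc m') - 1)))
         has_integral (Cm a1 a2 b1 b2 q p0 p1 (Suc m') * complex_of_real Gr)) {0..1}"
proof -
  define D where "D = max (degree p0) (degree p1)"
  define e where "e = q + real (Suc m') - 1"
  define sa where "sa = seq_a a1 a2 b1 b2 q"
  have pw: "t ^ i * t powr e = t powr (q + real (Suc m' + i) - 1)" if "t \<in> {0..1} - {0}" for t :: real and i
  proof -
    have t: "t > 0" using that by auto
    have "t ^ i = t powr real i" using t by (simp add: powr_realpow)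
    then show ?thesis unfolding e_def by (simp add: powr_add[symmetric] algebra_simps)
  qed
  have I0: "((\<lambda>t. F t * t ^ i * t powr e) has_integral (sa (Suc m' + i) * Gr)) {0..1}" for i
  proof (rule has_integral_spike_finite[OF _ _ moment[of "Suc m' + i", folded sa_def], of "{0}"])
    fix t :: real assume "t \<in> {0..1} - {0}"
    then show "F t * t ^ i * t powr e = F t * t powr (q + real (Suc m' + i) - 1)"
      using pw[of t i] by (simp add: mult.assoc)
  qed simp
  have I1: "((\<lambda>t. deriv F t * t ^ i * t powr e) has_integral (1 - (q + real (m' + i)) * sa (m' + i) * Gr)) {0..1}" for i
  proof (rule has_integral_spike_finite[OF _ _ deriv_moment[of "m' + i", folded sa_def], of "{0}"])
    fix t :: real assume "t \<in> {0..1} - {0}"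
    then show "deriv F t * t ^ i * t powr e = deriv F t * t powr (q + real (Suc (m' + i)) - 1)"
      using pw[of t i] by (simp add: mult.assoc)
  qed simp
  have S: "((\<lambda>t. \<Sum>i\<le>D. coeff p0 i * complex_of_real (F t * t ^ i * t powr e)
                   + coeff p1 i * complex_of_real (deriv F t * t ^ i * t powr e))
         has_integral (\<Sum>i\<le>D. coeff p0 i * complex_of_real (sa (Suc m' + i) * Gr)
                   + coeff p1 i * complex_of_real (1 - (q + real (m' + i)) * sa (m' + i) * Gr))) {0..1}"
    by (intro has_integral_sum has_integral_add has_integral_mult_right has_integral_of_real I0 I1) auto
  have d0: "degree p0 \<le> D" "degree p1 \<le> D" by (simp_all add: D_def)
  have E1: "(poly p0 (complex_of_real t) * complex_of_real (F t)
                  + poly p1 (complex_of_real t) * complex_of_real (deriv F t))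
                 * complex_of_real (t powr e) =
      (\<Sum>i\<le>D. coeff p0 i * complex_of_real (F t * t ^ i * t powr e)
                   + coeff p1 i * complex_of_real (deriv F t * t ^ i * t powr e))" for t
    unfolding poly_sum_le[OF d0(1)] poly_sum_le[OF d0(2)]
    by (simp add: distrib_left distrib_right sum_distrib_left sum_distrib_right sum.distrib mult_ac)
  have P1: "(\<Sum>i\<le>D. coeff p1 i) = 0"
    using poly_sum_le[OF d0(2), of 1] p1 by simp
  have E2: "(\<Sum>i\<le>D. coeff p0 i * complex_of_real (sa (Suc m' + i) * Gr)
                   + coeff p1 i * complex_of_real (1 - (q + real (m' + i)) * sa (m' + i) * Gr))
      = Cm a1 a2 b1 b2 q p0 p1 (Suc m') * complex_of_real Gr + (\<Sum>i\<le>D. coeff p1 i)"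
    unfolding Cm_split[of p0 p1 m', folded D_def sa_def]
    by (simp add: sum_distrib_left sum_distrib_right sum.distrib sum_subtractf algebra_simps)
  have EF: "(\<lambda>t. \<Sum>i\<le>D. coeff p0 i * complex_of_real (F t * t ^ i * t powr e)
                   + coeff p1 i * complex_of_real (deriv F t * t ^ i * t powr e)) =
     (\<lambda>t. (poly p0 (complex_of_real t) * complex_of_real (F t)
                  + poly p1 (complex_of_real t) * complex_of_real (deriv F t))
                 * complex_of_real (t powr e))"
    by (rule ext, rule E1[symmetric])
  from S[unfolded EF E2 P1] show ?thesis unfolding e_def by simp
qed

end


lemma sum_trunc:
  fixes f :: "nat \<Rightarrow> 'a::comm_monoid_add"
  assumes "\<And>i. i > B \<Longrightarrow> f i = 0" "B \<le> B1" "B \<le> B2"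
  shows "(\<Sum>i\<le>B1. f i) = (\<Sum>i\<le>B2. f i)"
proof -
  have "(\<Sum>i\<le>B1. f i) = (\<Sum>i\<le>B. f i)"
    by (rule sum.mono_neutral_right) (use assms in auto)
  also have "\<dots> = (\<Sum>i\<le>B2. f i)"
    by (rule sum.mono_neutral_left) (use assms in auto)
  finally show ?thesis .
qed

context hsetup begin

definition Ur :: "nat \<Rightarrow> real \<Rightarrow> real" where "Ur k y = (y + a1 + real k) * (y + a2 + real k)"
definition Vr :: "nat \<Rightarrow> real \<Rightarrow> real" where "Vr k y = (y + 1 - b1 + real k) * (y + 1 - b2 + real k)"
definition Uq :: "nat \<Rightarrow> complex poly" where
  "Uq k = [:complex_of_real (a1 + real k), 1:] * [:complex_of_real (a2 + real k), 1:]"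
definition Vq :: "nat \<Rightarrow> complex poly" where
  "Vq k = [:complex_of_real (1 - b1 + real k), 1:] * [:complex_of_real (1 - b2 + real k), 1:]"

lemma poly_Uq: "poly (Uq k) (complex_of_real y) = complex_of_real (Ur k y)"
  unfolding Uq_def Ur_def by (simp add: algebra_simps)
lemma poly_Vq: "poly (Vq k) (complex_of_real y) = complex_of_real (Vr k y)"
  unfolding Vq_def Vr_def by (simp add: algebra_simps)

lemma nb: "1 - b1 + q \<notin> \<int>" "1 - b2 + q \<notin> \<int>"
proof -
  show "1 - b1 + q \<notin> \<int>"
  proof
    assume "1 - b1 + q \<in> \<int>" then have "1 - b1 + q - 1 \<in> \<int>" by (intro Ints_diff) auto
    with qb1 show False by (simp add: algebra_simps)
  qed
  show "1 - b2 + q \<notin> \<int>"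
  proof
    assume "1 - b2 + q \<in> \<int>" then have "1 - b2 + q - 1 \<in> \<int>" by (intro Ints_diff) auto
    with qb2 show False by (simp add: algebra_simps)
  qed
qed

lemma poch_ne0: "(z::real) \<notin> \<int> \<Longrightarrow> pochhammer z n \<noteq> 0"
  using pochhammer_eq_0_imp_nonpos_Int[of z n] notInt_nonpos[of z] by auto

lemma sa_Suc: "seq_a a1 a2 b1 b2 q (Suc n) * ((1 - b1 + q + real n) * (1 - b2 + q + real n)) =
    seq_a a1 a2 b1 b2 q n * ((a1 + q + real n) * (a2 + q + real n))"
proof -
  have i1: "1 - b1 + q + real n \<notin> \<int>" "1 - b2 + q + real n \<notin> \<int>"
    by (rule notInt_add_nat[OF nb(1)], rule notInt_add_nat[OF nb(2)])
  have n1: "1 - b1 + q + real n \<noteq> 0" "1 - b2 + q + real n \<noteq> 0"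
    using i1 by (metis Ints_0)+
  have p: "pochhammer (1 - b1 + q) n \<noteq> 0" "pochhammer (1 - b2 + q) n \<noteq> 0"
    using poch_ne0 nb by auto
  have alg: "\<And>P1 P2 Q1 Q2 u1 u2 v1 v2::real. Q1 \<noteq> 0 \<Longrightarrow> Q2 \<noteq> 0 \<Longrightarrow> v1 \<noteq> 0 \<Longrightarrow> v2 \<noteq> 0 \<Longrightarrow>
     (P1 * u1) * (P2 * u2) / ((Q1 * v1) * (Q2 * v2)) * (v1 * v2) = P1 * P2 / (Q1 * Q2) * (u1 * u2)"
    by (simp add: field_simps)
  show ?thesis unfolding seq_a_def pochhammer_Suc by (rule alg) (use n1 p in auto)
qed

lemma sa_shift:
  "seq_a a1 a2 b1 b2 q (m' + j) * (\<Prod>k<j. Vr k (q + real m')) =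
   seq_a a1 a2 b1 b2 q m' * (\<Prod>k<j. Ur k (q + real m'))"
proof (induction j)
  case 0 then show ?case by simp
next
  case (Suc j)
  have "seq_a a1 a2 b1 b2 q (m' + Suc j) * (\<Prod>k<Suc j. Vr k (q + real m'))
      = (seq_a a1 a2 b1 b2 q (Suc (m' + j)) * ((1 - b1 + q + real (m' + j)) * (1 - b2 + q + real (m' + j))))
        * (\<Prod>k<j. Vr k (q + real m'))"
    by (simp add: Vr_def algebra_simps)
  also have "\<dots> = (seq_a a1 a2 b1 b2 q (m' + j) * (\<Prod>k<j. Vr k (q + real m'))) * ((a1 + q + real (m' + j)) * (a2 + q + real (m' + j)))"
    unfolding sa_Suc by (simp add: algebra_simps)
  also have "\<dots> = seq_a a1 a2 b1 b2 q m' * (\<Prod>k<Suc j. Ur k (q + real m'))"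
    unfolding Suc by (simp add: Ur_def algebra_simps)
  finally show ?case .
qed

end


context hsetup begin

definition dm :: "complex poly \<Rightarrow> nat \<Rightarrow> complex" where
  "dm p0 j = (if j = 0 then 0 else coeff p0 (j - 1))"
definition Eq :: "complex poly \<Rightarrow> complex poly \<Rightarrow> nat \<Rightarrow> complex poly" where
  "Eq p0 p1 j = [: dm p0 j - coeff p1 j * of_nat j, - coeff p1 j :]"
definition Pq :: "complex poly \<Rightarrow> complex poly \<Rightarrow> nat \<Rightarrow> complex poly" where
  "Pq p0 p1 N = (\<Sum>j\<le>Suc N. Eq p0 p1 j * (\<Prod>k<j. Uq k) * (\<Prod>k\<in>{j..<Suc N}. Vq k))"

lemma poly_Eq: "poly (Eq p0 p1 j) (complex_of_real y) = dm p0 j - coeff p1 j * complex_of_real (y + real j)"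
  unfolding Eq_def by (simp add: algebra_simps)

lemma prod_split_at:
  fixes f :: "nat \<Rightarrow> real"
  assumes "j \<le> L"
  shows "(\<Prod>k<L. f k) = (\<Prod>k<j. f k) * (\<Prod>k\<in>{j..<L}. f k)"
proof -
  have "(\<Prod>k<L. f k) = (\<Prod>k\<in>{0..<L}. f k)" by (simp add: lessThan_atLeast0)
  also have "\<dots> = (\<Prod>k\<in>{0..<j}. f k) * (\<Prod>k\<in>{j..<L}. f k)"
    using assms by (subst prod.atLeastLessThan_concat) auto
  finally show ?thesis by (simp add: lessThan_atLeast0)
qed

lemma C_eq:
  fixes p0 p1 :: "complex poly"
  assumes d0: "degree p0 \<le> N" and d1: "degree p1 \<le> Suc N"
  shows "Cm a1 a2 b1 b2 q p0 p1 (Suc m') * complex_of_real (\<Prod>k<Suc N. Vr k (q + real m'))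
     = complex_of_real (seq_a a1 a2 b1 b2 q m') * poly (Pq p0 p1 N) (complex_of_real (q + real m'))"
proof -
  define D where "D = max (degree p0) (degree p1)"
  define sa where "sa = seq_a a1 a2 b1 b2 q"
  define y where "y = q + real m'"
  have s1: "(\<Sum>i\<le>D. coeff p0 i * complex_of_real (sa (Suc m' + i))) = (\<Sum>i\<le>N. coeff p0 i * complex_of_real (sa (Suc m' + i)))"
    by (rule sum_trunc[where B="degree p0"]) (use d0 in \<open>auto simp: D_def coeff_eq_0\<close>)
  have s2: "(\<Sum>i\<le>D. coeff p1 i * complex_of_real ((q + real (m' + i)) * sa (m' + i)))
      = (\<Sum>i\<le>Suc N. coeff p1 i * complex_of_real ((q + real (m' + i)) * sa (m' + i)))"
    by (rule sum_trunc[where B="degree p1"]) (use d1 in \<open>auto simp: D_def coeff_eq_0\<close>)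
  have s3: "(\<Sum>i\<le>N. coeff p0 i * complex_of_real (sa (Suc m' + i))) = (\<Sum>j\<le>Suc N. dm p0 j * complex_of_real (sa (m' + j)))"
    by (subst sum.atMost_Suc_shift) (simp add: dm_def)
  have C: "Cm a1 a2 b1 b2 q p0 p1 (Suc m') =
      (\<Sum>j\<le>Suc N. (dm p0 j - coeff p1 j * complex_of_real (y + real j)) * complex_of_real (sa (m' + j)))"
    unfolding Cm_split[of p0 p1 m', folded D_def sa_def] s1 s2 s3
    by (simp add: y_def algebra_simps sum_subtractf)
  have W: "complex_of_real (sa (m' + j) * (\<Prod>k<Suc N. Vr k y)) =
      complex_of_real (sa m') * (complex_of_real (\<Prod>k<j. Ur k y) * complex_of_real (\<Prod>k\<in>{j..<Suc N}. Vr k y))"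
    if "j \<le> Suc N" for j
  proof -
    have "sa (m' + j) * (\<Prod>k<Suc N. Vr k y) = (sa (m' + j) * (\<Prod>k<j. Vr k y)) * (\<Prod>k\<in>{j..<Suc N}. Vr k y)"
      using prod_split_at[OF that, of "\<lambda>k. Vr k y"] by simp
    also have "\<dots> = sa m' * (\<Prod>k<j. Ur k y) * (\<Prod>k\<in>{j..<Suc N}. Vr k y)"
      unfolding sa_def y_def sa_shift ..
    finally show ?thesis by simp
  qed
  have P: "poly (Pq p0 p1 N) (complex_of_real y) =
     (\<Sum>j\<le>Suc N. (dm p0 j - coeff p1 j * complex_of_real (y + real j)) *
        (complex_of_real (\<Prod>k<j. Ur k y) * complex_of_real (\<Prod>k\<in>{j..<Suc N}. Vr k y)))"
    unfolding Pq_def by (simp add: poly_sum poly_prod poly_Eq poly_Uq poly_Vq mult_ac)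
  have "Cm a1 a2 b1 b2 q p0 p1 (Suc m') * complex_of_real (\<Prod>k<Suc N. Vr k y) =
     (\<Sum>j\<le>Suc N. (dm p0 j - coeff p1 j * complex_of_real (y + real j)) * complex_of_real (sa (m' + j) * (\<Prod>k<Suc N. Vr k y)))"
    unfolding C sum_distrib_right by (intro sum.cong refl) (simp add: mult_ac)
  also have "\<dots> = (\<Sum>j\<le>Suc N. (dm p0 j - coeff p1 j * complex_of_real (y + real j)) *
      (complex_of_real (sa m') * (complex_of_real (\<Prod>k<j. Ur k y) * complex_of_real (\<Prod>k\<in>{j..<Suc N}. Vr k y))))"
  proof (rule sum.cong[OF refl])
    fix j assume "j \<in> {..Suc N}"
    then have j: "j \<le> Suc N" by simp
    show "(dm p0 j - coeff p1 j * complex_of_real (y + real j)) * complex_of_real (sa (m' + j) * (\<Prod>k<Suc N. Vr k y)) =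
      (dm p0 j - coeff p1 j * complex_of_real (y + real j)) *
      (complex_of_real (sa m') * (complex_of_real (\<Prod>k<j. Ur k y) * complex_of_real (\<Prod>k\<in>{j..<Suc N}. Vr k y)))"
      by (simp only: W[OF j])
  qed
  also have "\<dots> = complex_of_real (sa m') * poly (Pq p0 p1 N) (complex_of_real y)"
    unfolding P sum_distrib_left by (intro sum.cong refl) (simp add: mult_ac)
  finally show ?thesis unfolding y_def sa_def .
qed

end


context hsetup begin

lemma Pq_decomp:
  "Pq p0 p1 N = (\<Sum>j\<le>N. Eq p0 p1 j * (\<Prod>k<j. Uq k) * (\<Prod>k\<in>{j..<N}. Vq k)) * Vq N
      + Eq p0 p1 (Suc N) * (\<Prod>k<Suc N. Uq k)"
proof -
  have "(\<Sum>j\<le>N. Eq p0 p1 j * (\<Prod>k<j. Uq k) * (\<Prod>k\<in>{j..<Suc N}. Vq k))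
      = (\<Sum>j\<le>N. Eq p0 p1 j * (\<Prod>k<j. Uq k) * (\<Prod>k\<in>{j..<N}. Vq k)) * Vq N"
    unfolding sum_distrib_right by (intro sum.cong refl) (simp add: prod.atLeastLessThan_Suc mult_ac)
  then show ?thesis unfolding Pq_def by (subst sum.atMost_Suc) simp
qed

lemma Ur_prod_ne0:
  assumes "b \<in> {b1, b2}" and ab21: "a2 + b1 \<notin> \<int>" and ab22: "a2 + b2 \<notin> \<int>"
  shows "(\<Prod>k<L. Ur k (b - real L)) \<noteq> 0"
proof -
  have nz: "x + real k - real L \<noteq> 0" if "x \<notin> \<int>" for x :: real and k
  proof
    assume "x + real k - real L = 0"
    then have "x = real L - real k" by simp
    then have "x \<in> \<int>" by simp
    with that show False by simp
  qed
  have i: "a1 + b \<notin> \<int>" "a2 + b \<notin> \<int>" using assms ab1 ab2 by (auto simp: add.commute)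
  have "Ur k (b - real L) \<noteq> 0" for k
  proof -
    have f1: "b - real L + a1 + real k \<noteq> 0" using nz[OF i(1), of k] by (simp add: algebra_simps)
    have f2: "b - real L + a2 + real k \<noteq> 0" using nz[OF i(2), of k] by (simp add: algebra_simps)
    show ?thesis unfolding Ur_def using f1 f2 by simp
  qed
  then show ?thesis by simp
qed

lemma Pq_nonzero:
  fixes p0 p1 :: "complex poly"
  assumes nz: "coeff p0 N \<noteq> 0 \<or> coeff p1 (Suc N) \<noteq> 0"
    and ab21: "a2 + b1 \<notin> \<int>" and ab22: "a2 + b2 \<notin> \<int>"
  shows "Pq p0 p1 N \<noteq> 0"
proof -
  define L where "L = Suc N"
  define R where "R = (\<Sum>j\<le>N. Eq p0 p1 j * (\<Prod>k<j. Uq k) * (\<Prod>k\<in>{j..<N}. Vq k))"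
  define U where "U = (\<Prod>k<Suc N. Uq k)"
  define c where "c = coeff p1 L"
  have dec: "Pq p0 p1 N = R * Vq N + Eq p0 p1 L * U" unfolding R_def U_def L_def by (rule Pq_decomp)
  have EL: "poly (Eq p0 p1 L) (complex_of_real y) = coeff p0 N - c * complex_of_real (y + real L)" for y
    unfolding poly_Eq c_def L_def dm_def by simp
  have Ub: "poly U (complex_of_real (b - real L)) \<noteq> 0" if "b \<in> {b1, b2}" for b
    unfolding U_def poly_prod poly_Uq L_def[symmetric]
    using Ur_prod_ne0[OF that ab21 ab22, of L] by (simp add: L_def)
  have V0: "poly (Vq N) (complex_of_real (b - real L)) = 0" if "b \<in> {b1, b2}" for b
    using that unfolding poly_Vq Vr_def L_def by auto
  have ev: "poly (Pq p0 p1 N) (complex_of_real (b - real L)) =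
      (coeff p0 N - c * complex_of_real b) * poly U (complex_of_real (b - real L))" if "b \<in> {b1, b2}" for b
    unfolding dec poly_add poly_mult V0[OF that] EL by simp
  show ?thesis
  proof (cases "coeff p0 N - c * complex_of_real b1 \<noteq> 0 \<or> coeff p0 N - c * complex_of_real b2 \<noteq> 0")
    case True
    then obtain b where b: "b \<in> {b1, b2}" "coeff p0 N - c * complex_of_real b \<noteq> 0" by blast
    have "poly (Pq p0 p1 N) (complex_of_real (b - real L)) \<noteq> 0"
      unfolding ev[OF b(1)] using b(2) Ub[OF b(1)] by simp
    then show ?thesis by auto
  next
    case False
    then have e1: "coeff p0 N = c * complex_of_real b1" and e2: "coeff p0 N = c * complex_of_real b2" by auto
    have c0: "c \<noteq> 0" using nz e1 unfolding c_def L_def by auto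
    have bb: "b1 = b2" using e1 e2 c0 by simp
    define y0 where "y0 = complex_of_real (b1 - real L)"
    define X where "X = [:- y0, 1:]"
    have VX: "Vq N = X * X" unfolding Vq_def X_def y0_def L_def using bb by (simp add: algebra_simps)
    have EX: "Eq p0 p1 L = smult (- c) X"
      unfolding Eq_def X_def y0_def dm_def L_def c_def[unfolded L_def] using e1
      by (simp add: c_def L_def algebra_simps)
    define B where "B = R * X + smult (- c) U"
    have PB: "Pq p0 p1 N = X * B" unfolding dec VX EX B_def by (simp add: algebra_simps)
    have "poly B y0 = - c * poly U y0"
      unfolding B_def X_def by simp
    also have "\<dots> \<noteq> 0" using c0 Ub[of b1] unfolding y0_def by simp
    finally have "B \<noteq> 0" by auto
    moreover have "X \<noteq> 0" unfolding X_def by simp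
    ultimately show ?thesis unfolding PB by simp
  qed
qed

end


context hsetup begin

lemma sa_ne0: "seq_a a1 a2 b1 b2 q n \<noteq> 0"
proof -
  have "pochhammer (a1 + q) n > 0" "pochhammer (a2 + q) n > 0"
    using qa1 qa2 by (auto intro!: pochhammer_pos simp: add.commute)
  moreover have "pochhammer (1 - b1 + q) n \<noteq> 0" "pochhammer (1 - b2 + q) n \<noteq> 0"
    using poch_ne0 nb by auto
  ultimately show ?thesis unfolding seq_a_def by simp
qed

lemma infinite_Cm:
  fixes p0 p1 :: "complex poly"
  assumes p: "p0 \<noteq> 0 \<or> p1 \<noteq> 0" and p1r: "poly p1 1 = 0"
    and ab21: "a2 + b1 \<notin> \<int>" and ab22: "a2 + b2 \<notin> \<int>"
  shows "infinite {m::nat. m \<ge> 1 \<and> Cm a1 a2 b1 b2 q p0 p1 m \<noteq> 0}"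
proof -
  obtain N where N: "degree p0 \<le> N" "degree p1 \<le> Suc N" "coeff p0 N \<noteq> 0 \<or> coeff p1 (Suc N) \<noteq> 0"
  proof (cases "p1 \<noteq> 0 \<and> degree p1 > degree p0")
    case True
    then have "Suc (degree p1 - 1) = degree p1" by auto
    then show ?thesis using True by (intro that[of "degree p1 - 1"]) auto
  next
    case False
    have "p0 \<noteq> 0"
    proof
      assume p00: "p0 = 0"
      then have "p1 \<noteq> 0" "degree p1 = 0" using p False by auto
      then obtain c where "p1 = [:c:]" by (metis degree_eq_zeroE)
      with p1r \<open>p1 \<noteq> 0\<close> show False by simp
    qed
    then show ?thesis using False by (intro that[of "degree p0"]) (auto simp: not_less)
  qed
  define P where "P = Pq p0 p1 N"
  have P0: "P \<noteq> 0" unfolding P_def by (rule Pq_nonzero[OF N(3) ab21 ab22])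
  have fin: "finite {x. poly P x = 0}" by (rule poly_roots_finite[OF P0])
  have sub: "{m'. Cm a1 a2 b1 b2 q p0 p1 (Suc m') = 0} \<subseteq> (\<lambda>m'. complex_of_real (q + real m')) -` {x. poly P x = 0}"
  proof
    fix m' assume "m' \<in> {m'. Cm a1 a2 b1 b2 q p0 p1 (Suc m') = 0}"
    then have "Cm a1 a2 b1 b2 q p0 p1 (Suc m') = 0" by simp
    with C_eq[OF N(1,2), of m'] have "complex_of_real (seq_a a1 a2 b1 b2 q m') * poly P (complex_of_real (q + real m')) = 0"
      unfolding P_def by simp
    with sa_ne0 show "m' \<in> (\<lambda>m'. complex_of_real (q + real m')) -` {x. poly P x = 0}" by simp
  qed
  have "inj (\<lambda>m'::nat. complex_of_real (q + real m'))" by (auto simp: inj_def)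
  then have "finite ((\<lambda>m'. complex_of_real (q + real m')) -` {x. poly P x = 0})"
    by (intro finite_vimageI fin)
  with sub have finZ: "finite {m'. Cm a1 a2 b1 b2 q p0 p1 (Suc m') = 0}" by (rule finite_subset)
  have "infinite (UNIV - {m'. Cm a1 a2 b1 b2 q p0 p1 (Suc m') = 0})"
    by (rule Diff_infinite_finite[OF finZ]) simp
  then have inf1: "infinite {m'. Cm a1 a2 b1 b2 q p0 p1 (Suc m') \<noteq> 0}" by (simp add: set_diff_eq)
  have "Suc ` {m'. Cm a1 a2 b1 b2 q p0 p1 (Suc m') \<noteq> 0} \<subseteq> {m::nat. m \<ge> 1 \<and> Cm a1 a2 b1 b2 q p0 p1 m \<noteq> 0}"
    by auto
  moreover have "infinite (Suc ` {m'. Cm a1 a2 b1 b2 q p0 p1 (Suc m') \<noteq> 0})"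
    using inf1 by (auto dest: finite_imageD)
  ultimately show ?thesis by (rule infinite_super)
qed

end

theorem proposition6p1:
  fixes a1 a2 b1 b2 q :: real and p0 p1 :: "complex poly"
  assumes rat: "a1 \<in> \<rat>" "a2 \<in> \<rat>" "b1 \<in> \<rat>" "b2 \<in> \<rat>" "q \<in> \<rat>"
    and sum1: "a1 + a2 + b1 + b2 = 1"
    and ab: "a1 + b1 \<notin> \<int>" "a1 + b2 \<notin> \<int>" "a2 + b1 \<notin> \<int>" "a2 + b2 \<notin> \<int>"
    and qa: "q + a1 \<notin> \<int>" "q + a2 \<notin> \<int>"
    and qb: "q - b1 \<notin> \<int>" "q - b2 \<notin> \<int>"
    and qpos: "q + a1 > 0" "q + a2 > 0"
    and p1root: "poly p1 1 = 0"
  shows "(\<forall>m::nat. m \<ge> 1 \<longrightarrow>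
           ((\<lambda>t. (poly p0 (complex_of_real t) * complex_of_real (F1 a1 b1 b2 t)
                  + poly p1 (complex_of_real t) * complex_of_real (deriv (F1 a1 b1 b2) t))
                 * complex_of_real (t powr (q + real m - 1)))
            has_integral
              (Cm a1 a2 b1 b2 q p0 p1 m *
               complex_of_real (Gamma (a1 + q) * Gamma (a2 + q) /
                                (Gamma (1 - b1 + q) * Gamma (1 - b2 + q))))) {0..1})
         \<and> ((p0 \<noteq> 0 \<or> p1 \<noteq> 0) \<longrightarrow>
              infinite {m::nat. m \<ge> 1 \<and> Cm a1 a2 b1 b2 q p0 p1 m \<noteq> 0})"
proof -
  interpret hs: hsetup a1 a2 b1 b2 q
    by (rule hsetup.intro) (use sum1 ab qb qpos in auto)
  show ?thesis
  proof (intro conjI allI impI)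
    fix m :: nat assume "m \<ge> 1"
    then obtain m' where m: "m = Suc m'" by (cases m) auto
    show "((\<lambda>t. (poly p0 (complex_of_real t) * complex_of_real (F1 a1 b1 b2 t)
                  + poly p1 (complex_of_real t) * complex_of_real (deriv (F1 a1 b1 b2) t))
                 * complex_of_real (t powr (q + real m - 1)))
            has_integral
              (Cm a1 a2 b1 b2 q p0 p1 m *
               complex_of_real (Gamma (a1 + q) * Gamma (a2 + q) /
                                (Gamma (1 - b1 + q) * Gamma (1 - b2 + q))))) {0..1}"
      using hs.main_integral[OF p1root, of p0 m'] unfolding m hs.Gr_def .
  next
    assume "p0 \<noteq> 0 \<or> p1 \<noteq> 0"
    then show "infinite {m::nat. m \<ge> 1 \<and> Cm a1 a2 b1 b2 q p0 p1 m \<noteq> 0}"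
      by (rule hs.infinite_Cm[OF _ p1root ab(3) ab(4)])
  qed
qed


end
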